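(* Let $q\in k^\times$ with $q\neq1$, and let $\tau_q\colon k[y]\otimes k[x]\to k[x]\otimes k[y]$ be the twisting map \[\tau_q(y^m\otimes f)=\sum_{i=0}^m \genfrac{[}{]}{0pt}{0}{m}{i}_q\,\theta^i\partial_q^{m-i}(f)\otimes y^i,\] so that $k[x]\otimes_{\tau_q}k[y]$ is the quantized Weyl algebra $A_1^q(k)=k\langle x,y\mid yx-qxy=1\rangle$. Then $\tau_q$ is continuous as a map $k[y]\otimes^!k[x]\to k[x]\otimes^!k[y]$ (for the cofinite topologies on $k[x]$ and $k[y]$) if and only if $q$ is a root of unity.
   Context: $k$ is a field with the discrete topology. $\theta$ is the automorphism $f(x)\mapsto f(qx)$ of $k[x]$ and $\partial_q$ is the $q$-derivative, $\partial_q x^n=[n]_q x^{n-1}$ with $[n]_q=1+q+\dots+q^{n-1}$. The $q$-binomial coefficient $\genfrac{[}{]}{0pt}{0}{m}{i}_q$ is obtained by evaluating at $t=q$ the integer polynomial $[m]_t!/([i]_t![m-i]_t!)$, where $[n]_t!=[n]_t[n-1]_t\cdots[1]_t$. For an algebra $R$, the cofinite topology is the linear topology whose open subspaces are those containing a two-sided ideal of finite codimension. For linearly topologized spaces $E,F$, $E\otimes^!F$ is $E\otimes F$ with the linear topology whose open subspaces contain $E_0\otimes F+E\otimes F_0$ for some open subspaces $E_0\subseteq E$, $F_0\subseteq F$. $k[x]\otimes_\tau k[y]$ is $k[x]\otimes k[y]$ with multiplication $(m\otimes m)\circ(\mathrm{id}\otimes\tau\otimes\mathrm{id})$. *)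

theory Defs
  imports "HOL-Computational_Algebra.Polynomial"
begin

text \<open>The tensor product k[u] \<otimes> k[v]
  is represented as \<open>'a poly poly\<close>: the outer variable is the variable u of the FIRST
  tensor factor, the coefficients (inner polynomials) live in the SECOND factor k[v].\<close>

definition ptens :: "'a::field poly \<Rightarrow> 'a poly \<Rightarrow> 'a poly poly" where
  "ptens e f = map_poly (\<lambda>c. smult c f) e"

definition lsub :: "('k \<Rightarrow> 'v \<Rightarrow> 'v) \<Rightarrow> 'v::ab_group_add set \<Rightarrow> bool" where
  "lsub scl S \<longleftrightarrow> 0 \<in> S \<and> (\<forall>a\<in>S. \<forall>b\<in>S. a + b \<in> S) \<and> (\<forall>c a. a \<in> S \<longrightarrow> scl c a \<in> S)"

definition poly_ideal :: "'a::field poly set \<Rightarrow> bool" where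
  "poly_ideal I \<longleftrightarrow> 0 \<in> I \<and> (\<forall>a\<in>I. \<forall>b\<in>I. a + b \<in> I) \<and>
     (\<forall>p a. a \<in> I \<longrightarrow> p * a \<in> I \<and> a * p \<in> I)"

definition fin_codim :: "'a::field poly set \<Rightarrow> bool" where
  "fin_codim I \<longleftrightarrow> (\<exists>bs :: 'a poly list. \<forall>p. \<exists>cs :: 'a list. length cs = length bs \<and>
      p - (\<Sum>i<length bs. smult (cs ! i) (bs ! i)) \<in> I)"

definition cofinite_open :: "'a::field poly set \<Rightarrow> bool" where
  "cofinite_open U \<longleftrightarrow> lsub smult U \<and> (\<exists>I. poly_ideal I \<and> fin_codim I \<and> I \<subseteq> U)"

definition tens_sub :: "'a::field poly set \<Rightarrow> 'a poly set \<Rightarrow> 'a poly poly set" where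
  "tens_sub A B = {\<Sum>i<n. ptens (es i) (fs i) | (n::nat) (es::nat \<Rightarrow> 'a poly) (fs::nat \<Rightarrow> 'a poly).
      \<forall>i<n. es i \<in> A \<and> fs i \<in> B}"

text \<open>Open subspaces of k[u] \<otimes>^! k[v] (both factors with the cofinite topology).\<close>
definition bang_open :: "'a::field poly poly set \<Rightarrow> bool" where
  "bang_open W \<longleftrightarrow> lsub (\<lambda>c. smult [:c:]) W \<and>
     (\<exists>E0 F0. cofinite_open E0 \<and> cofinite_open F0 \<and>
        {a + b | a b. a \<in> tens_sub E0 UNIV \<and> b \<in> tens_sub UNIV F0} \<subseteq> W)"

definition bang_continuous :: "('a::field poly poly \<Rightarrow> 'a poly poly) \<Rightarrow> bool" where
  "bang_continuous T \<longleftrightarrow> (\<forall>W. bang_open W \<longrightarrow> (\<exists>V. bang_open V \<and> T ` V \<subseteq> W))"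

definition qint :: "'a::comm_ring_1 \<Rightarrow> nat \<Rightarrow> 'a" where
  "qint q n = (\<Sum>i<n. q ^ i)"

definition qderiv :: "'a::field \<Rightarrow> 'a poly \<Rightarrow> 'a poly" where
  "qderiv q f = (\<Sum>n\<le>degree f. monom (qint q n * coeff f n) (n - 1))"

definition theta :: "'a::field \<Rightarrow> 'a poly \<Rightarrow> 'a poly" where
  "theta q f = pcompose f [:0, q:]"

definition tint_poly :: "nat \<Rightarrow> int poly" where
  "tint_poly n = (\<Sum>l<n. monom 1 l)"

definition tfact_poly :: "nat \<Rightarrow> int poly" where
  "tfact_poly n = (\<Prod>j\<in>{1..n}. tint_poly j)"

definition qbinom :: "'a::field \<Rightarrow> nat \<Rightarrow> nat \<Rightarrow> 'a" where
  "qbinom q m i = poly (map_poly of_int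
      (tfact_poly m div (tfact_poly i * tfact_poly (m - i)))) q"

text \<open>Input P = \<Sum>_m y^m \<otimes> coeff P m (outer variable y, inner x);
  output in k[x] \<otimes> k[y] (outer variable x, inner y).\<close>
definition tau :: "'a::field \<Rightarrow> 'a poly poly \<Rightarrow> 'a poly poly" where
  "tau q P = (\<Sum>m\<le>degree P. \<Sum>i\<le>m.
      ptens (smult (qbinom q m i) ((theta q ^^ i) ((qderiv q ^^ (m - i)) (coeff P m))))
            (monom 1 i))"

end

theory Submission
  imports Defs
begin


lemma map_poly_of_int_add: "map_poly (of_int::int\<Rightarrow>'a::comm_ring_1) (a + b) = map_poly of_int a + map_poly of_int b"
  by (rule poly_eqI) (simp add: coeff_map_poly)

lemma map_poly_of_int_mult: "map_poly (of_int::int\<Rightarrow>'a::comm_ring_1) (a * b) = map_poly of_int a * map_poly of_int b"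
  by (rule poly_eqI) (simp add: coeff_map_poly coeff_mult)

definition ev :: "'a::field \<Rightarrow> int poly \<Rightarrow> 'a" where
  "ev q p = poly (map_poly of_int p) q"

lemma ev_add: "ev q (a + b) = ev q a + ev q b"
  by (simp add: ev_def map_poly_of_int_add)
lemma ev_mult: "ev q (a * b) = ev q a * ev q b"
  by (simp add: ev_def map_poly_of_int_mult)
lemma ev_1[simp]: "ev q 1 = 1" by (simp add: ev_def)
lemma ev_0[simp]: "ev q 0 = 0" by (simp add: ev_def)
lemma ev_monom1[simp]: "ev q (monom 1 n) = q ^ n"
  by (simp add: ev_def map_poly_monom poly_monom)

lemma ev_tint: "ev q (tint_poly n) = qint q n"
  by (induction n) (simp_all add: tint_poly_def qint_def ev_add)

lemma tfact_Suc: "tfact_poly (Suc n) = tint_poly (Suc n) * tfact_poly n"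
  unfolding tfact_poly_def by (simp add: prod.cl_ivl_Suc mult.commute)
  
lemma tfact_0[simp]: "tfact_poly 0 = 1" by (simp add: tfact_poly_def)

lemma tint_add: "tint_poly (a + b) = tint_poly a + monom 1 a * tint_poly b"
  by (induction b) (simp_all add: tint_poly_def algebra_simps mult_monom)

lemma tint_nz: "n > 0 \<Longrightarrow> tint_poly n \<noteq> 0"
proof -
  assume "n > 0"
  have "coeff (tint_poly n) 0 = 1" using \<open>n>0\<close> 
    by (simp add: tint_poly_def coeff_sum coeff_monom)
  then show ?thesis by auto
qed

lemma tfact_nz: "tfact_poly n \<noteq> 0"
  by (induction n) (simp_all add: tfact_Suc tint_nz)

fun Bq :: "nat \<Rightarrow> nat \<Rightarrow> int poly" where
  "Bq m 0 = 1"
| "Bq 0 (Suc i) = 0"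
| "Bq (Suc m) (Suc i) = Bq m i + monom 1 (Suc i) * Bq m (Suc i)"

lemma B_gt: "i > m \<Longrightarrow> Bq m i = 0"
  by (induction m i rule: Bq.induct) auto

lemma B_diag: "Bq m m = 1"
  by (induction m) (simp_all add: B_gt)

lemma B_prop: "i \<le> m \<Longrightarrow> Bq m i * (tfact_poly i * tfact_poly (m - i)) = tfact_poly m"
proof (induction m arbitrary: i)
  case 0 then show ?case by simp
next
  case (Suc m)
  show ?case
  proof (cases i)
    case 0 then show ?thesis by simp
  next
    case (Suc j)
    with Suc.prems have jm: "j \<le> m" by simp
    have h1: "Bq m j * (tfact_poly (Suc j) * tfact_poly (m - j)) = tint_poly (Suc j) * tfact_poly m"
      using Suc.IH[OF jm] by (simp add: tfact_Suc algebra_simps)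
    have h2: "monom 1 (Suc j) * Bq m (Suc j) * (tfact_poly (Suc j) * tfact_poly (m - j))
        = monom 1 (Suc j) * tint_poly (m - j) * tfact_poly m"
    proof (cases "j = m")
      case True then show ?thesis by (simp add: B_gt tint_poly_def)
    next
      case False
      then have jm2: "Suc j \<le> m" using jm by simp
      then have "m - j = Suc (m - Suc j)" by simp
      then have "tfact_poly (m - j) = tint_poly (m - j) * tfact_poly (m - Suc j)"
        by (simp add: tfact_Suc)
      then show ?thesis using Suc.IH[OF jm2] by (simp add: algebra_simps)
    qed
    have "tint_poly (Suc m) = tint_poly (Suc j) + monom 1 (Suc j) * tint_poly (m - j)"
      using tint_add[of "Suc j" "m - j"] jm by simp
    have "Bq (Suc m) (Suc j) * (tfact_poly (Suc j) * tfact_poly (Suc m - Suc j))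
      = Bq m j * (tfact_poly (Suc j) * tfact_poly (m - j)) + monom 1 (Suc j) * Bq m (Suc j) * (tfact_poly (Suc j) * tfact_poly (m - j))"
      by (simp add: distrib_right)
    also have "\<dots> = (tint_poly (Suc j) + monom 1 (Suc j) * tint_poly (m - j)) * tfact_poly m"
      by (simp only: h1 h2 distrib_right)
    also have "\<dots> = tfact_poly (Suc m)" using \<open>tint_poly (Suc m) = _\<close> by (simp add: tfact_Suc)
    finally show ?thesis using \<open>i = Suc j\<close> by simp
  qed
qed

definition qb :: "'a::field \<Rightarrow> nat \<Rightarrow> nat \<Rightarrow> 'a" where
  "qb q m i = ev q (Bq m i)"

lemma qbinom_qb: "i \<le> m \<Longrightarrow> qbinom q m i = qb q m i"
proof -
  assume "i \<le> m"
  have "tfact_poly m div (tfact_poly i * tfact_poly (m - i)) = Bq m i"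
    using B_prop[OF \<open>i\<le>m\<close>] tfact_nz
    by (metis mult_eq_0_iff nonzero_mult_div_cancel_right)
  then show ?thesis by (simp add: qbinom_def qb_def ev_def)
qed

lemma qb_0[simp]: "qb q m 0 = 1" by (simp add: qb_def)
lemma qb_diag[simp]: "qb q m m = 1" by (simp add: qb_def B_diag)
lemma qb_gt: "i > m \<Longrightarrow> qb q m i = 0" by (simp add: qb_def B_gt)
lemma qb_Suc: "qb q (Suc m) (Suc i) = qb q m i + q ^ Suc i * qb q m (Suc i)"
  by (simp add: qb_def ev_add ev_mult)

lemma ev_tfact: "ev q (tfact_poly n) = (\<Prod>j\<in>{1..n}. qint q j)"
  by (induction n) (simp_all add: tfact_Suc ev_mult ev_tint prod.cl_ivl_Suc)

lemma qb_prop: "i \<le> m \<Longrightarrow> qb q m i * ((\<Prod>j\<in>{1..i}. qint q j) * (\<Prod>j\<in>{1..m-i}. qint q j))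
   = (\<Prod>j\<in>{1..m}. qint q j)"
  using arg_cong[OF B_prop, of i m "ev q"] by (simp add: qb_def ev_mult ev_tfact)

lemma qint_mult: "(q - 1) * qint q n = q ^ n - 1"
  by (induction n) (simp_all add: qint_def algebra_simps)



lemma coeff_theta: "coeff (theta q g) k = q ^ k * coeff g k"
  by (simp add: theta_def coeff_pcompose_linear)

lemma coeff_theta_pow: "coeff ((theta q ^^ i) g) k = q ^ (i * k) * coeff g k"
  by (induction i) (simp_all add: coeff_theta power_add)

lemma coeff_qderiv: "coeff (qderiv q g) k = qint q (Suc k) * coeff g (Suc k)"
proof -
  have "coeff (qderiv q g) k = (\<Sum>n\<le>degree g. if n - 1 = k then qint q n * coeff g n else 0)"
    by (simp add: qderiv_def coeff_sum coeff_monom eq_commute)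
  also have "\<dots> = (\<Sum>n\<le>degree g. if n = Suc k then qint q n * coeff g n else 0)"
    apply (rule sum.cong, simp)
    subgoal for n by (cases n) (auto simp: qint_def)
    done
  also have "\<dots> = qint q (Suc k) * coeff g (Suc k)"
    by (auto simp: coeff_eq_0)
  finally show ?thesis .
qed

fun Pq :: "'a::field \<Rightarrow> nat \<Rightarrow> nat \<Rightarrow> 'a" where
  "Pq q k 0 = 1"
| "Pq q k (Suc n) = qint q (Suc k) * Pq q (Suc k) n"

lemma coeff_qderiv_pow: "coeff ((qderiv q ^^ n) g) k = Pq q k n * coeff g (k + n)"
  by (induction n arbitrary: k) (simp_all add: coeff_qderiv)

lemma coeff_ptens: "coeff (ptens e f) k = smult (coeff e k) f"
  by (simp add: ptens_def coeff_map_poly)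

lemma coeff_coeff_ptens: "coeff (coeff (ptens e f) k) i = coeff e k * coeff f i"
  by (simp add: coeff_ptens)

lemma mult_if01: "(x::'a::semiring_1) * (if P then 1 else 0) = (if P then x else 0)" by simp

definition tt :: "'a::field \<Rightarrow> nat \<Rightarrow> 'a poly \<Rightarrow> 'a poly poly" where
  "tt q m f = (\<Sum>i\<le>m. ptens (smult (qbinom q m i) ((theta q ^^ i) ((qderiv q ^^ (m - i)) f))) (monom 1 i))"

lemma coeff_tt: "coeff (coeff (tt q m f) k) i =
   (if i \<le> m then qb q m i * q ^ (i * k) * Pq q k (m - i) * coeff f (k + (m - i)) else 0)"
proof -
  have "coeff (coeff (tt q m f) k) i = (\<Sum>j\<le>m. if i = j then
      qbinom q m j * coeff ((theta q ^^ j) ((qderiv q ^^ (m - j)) f)) k else 0)"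
    unfolding tt_def by (auto simp: coeff_sum coeff_coeff_ptens coeff_monom mult_if01 sum.delta' intro!: sum.cong)
  also have "\<dots> = (if i \<le> m then qbinom q m i * coeff ((theta q ^^ i) ((qderiv q ^^ (m - i)) f)) k else 0)"
    by (simp add: sum.delta)
  also have "\<dots> = (if i \<le> m then qb q m i * q ^ (i * k) * Pq q k (m - i) * coeff f (k + (m - i)) else 0)"
    by (simp add: qbinom_qb coeff_theta_pow coeff_qderiv_pow)
  finally show ?thesis .
qed

lemma tt_rec: "coeff (coeff (tt q (Suc m) f) k) i =
   (if i \<ge> 1 then q ^ k * coeff (coeff (tt q m f) k) (i - 1) else 0)
   + qint q (Suc k) * coeff (coeff (tt q m f) (Suc k)) i"
proof (cases i)
  case 0 then show ?thesis by (simp add: coeff_tt)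
next
  case (Suc j)
  show ?thesis
  proof (cases "j \<le> m")
    case False
    then show ?thesis using Suc by (simp add: coeff_tt)
  next
    case True
    have e: "Suc m - Suc j = m - j" by simp
    have e2: "Suc k + (m - Suc j) = k + (m - j)" if "j < m" using that by simp
    have e3: "qint q (Suc k) * Pq q (Suc k) (m - Suc j) = Pq q k (m - j)" if "j < m"
      using that by (metis Pq.simps(2) Suc_diff_Suc)
    show ?thesis
    proof (cases "j = m")
      case True
      then show ?thesis using Suc by (simp add: coeff_tt qb_gt power_add algebra_simps)
    next
      case False
      then have jm: "j < m" using True by simp
      have "coeff (coeff (tt q (Suc m) f) k) i = (qb q m j + q ^ Suc j * qb q m (Suc j)) * q ^ (Suc j * k) * Pq q k (m - j) * coeff f (k + (m - j))"
        using Suc True by (simp add: coeff_tt qb_Suc)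
      moreover have "coeff (coeff (tt q m f) k) (i - 1) = qb q m j * q ^ (j * k) * Pq q k (m - j) * coeff f (k + (m - j))"
        using Suc True by (simp add: coeff_tt)
      moreover have "coeff (coeff (tt q m f) (Suc k)) i = qb q m (Suc j) * q ^ (Suc j * Suc k) * Pq q (Suc k) (m - Suc j) * coeff f (k + (m - j))"
        using Suc jm e2 by (simp add: coeff_tt)
      ultimately show ?thesis using Suc e3[OF jm]
        by (simp add: algebra_simps power_add power_mult_distrib)
    qed
  qed
qed



lemma coeff_smult_monom_pp: fixes A :: "'a::field poly poly" shows "coeff (coeff (smult (monom 1 d) A) k) i = (if i < d then 0 else coeff (coeff A k) (i - d))"
  by (simp add: coeff_monom_mult)

lemma qint_zero_iff: "(q::'a::field) \<noteq> 1 \<Longrightarrow> qint q j = 0 \<longleftrightarrow> q ^ j = 1"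
  using qint_mult[of q j] by auto

lemma Pq_zero: "\<exists>j<n. qint q (Suc k + j) = 0 \<Longrightarrow> Pq q k n = 0"
proof (induction n arbitrary: k)
  case 0 then show ?case by simp
next
  case (Suc n)
  then obtain j where j: "j < Suc n" "qint q (Suc k + j) = 0" by auto
  show ?case
  proof (cases j)
    case 0 then show ?thesis using j by simp
  next
    case (Suc j')
    then have "qint q (Suc (Suc k) + j') = 0" "j' < n" using j by auto
    then show ?thesis using Suc.IH[of "Suc k"] by auto
  qed
qed

locale rou =
  fixes q :: "'a::field" and d :: nat
  assumes q0: "q \<noteq> 0" and q1: "q \<noteq> 1" and dpos: "d > 0" and qd: "q ^ d = 1"
    and dmin: "\<And>j. q ^ j = 1 \<Longrightarrow> d dvd j"
begin

lemma pow_one_iff: "q ^ j = 1 \<longleftrightarrow> d dvd j"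
  using dmin qd by (auto simp: power_mult elim!: dvdE)

lemma qint_zero_iff': "qint q j = 0 \<longleftrightarrow> d dvd j"
  using qint_zero_iff[OF q1] pow_one_iff by simp

lemma Pq_d: "n \<ge> d \<Longrightarrow> Pq q k n = 0"
proof -
  assume "n \<ge> d"
  define j where "j = d - 1 - k mod d"
  have "j < n" using dpos \<open>n \<ge> d\<close> by (simp add: j_def)
  moreover have "Suc k + j = d * (k div d + 1)"
  proof -
    define a where "a = k div d"
    define b where "b = k mod d"
    have ab: "k = d * a + b" "b < d" "a = k div d" "b = k mod d"
      unfolding a_def b_def using mod_less_divisor[OF dpos, of k] by simp_all
    then have "j = d - 1 - b" by (simp add: j_def)
    then have "Suc k + j = Suc (d * a + b) + (d - 1 - b)" using ab(1) by simp
    also have "\<dots> = d * a + d" using ab(2) by simp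
    finally show ?thesis by (simp add: ab(3) algebra_simps)
  qed
  then have "qint q (Suc k + j) = 0" by (simp add: qint_zero_iff')
  ultimately show ?thesis by (intro Pq_zero) auto
qed

lemma qb_d: "0 < i \<Longrightarrow> i < d \<Longrightarrow> qb q d i = 0"
proof -
  assume i: "0 < i" "i < d"
  have "(\<Prod>j\<in>{1..d}. qint q j) = 0"
    using dpos by (intro prod_zero) (auto simp: qint_zero_iff' intro!: bexI[of _ d])
  moreover have "(\<Prod>j\<in>{1..i}. qint q j) \<noteq> 0" using i
    by (auto simp: qint_zero_iff' dest: dvd_imp_le)
  moreover have "(\<Prod>j\<in>{1..d-i}. qint q j) \<noteq> 0" using i
    by (auto simp: qint_zero_iff' dest: dvd_imp_le)
  moreover have "qb q d i * ((\<Prod>j\<in>{1..i}. qint q j) * (\<Prod>j\<in>{1..d-i}. qint q j)) = 0"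
    using qb_prop[of i d q] i(2) \<open>(\<Prod>j\<in>{1..d}. qint q j) = 0\<close> by simp
  ultimately show ?thesis by simp
qed

lemma tt_shift_coeff: "coeff (coeff (tt q (m + d) f) k) i = (if i < d then 0 else coeff (coeff (tt q m f) k) (i - d))"
proof (induction m arbitrary: k i)
  case 0
  show ?case
  proof (cases "i < d")
    case True
    then show ?thesis
    proof (cases "i = 0")
      case True then show ?thesis using Pq_d[of d k] dpos by (simp add: coeff_tt)
    next
      case False then show ?thesis using \<open>i < d\<close> qb_d[of i] by (simp add: coeff_tt)
    qed
  next
    case False
    then show ?thesis using qd
      by (cases "i = d") (simp_all add: coeff_tt power_mult mult.commute)
  qed
next
  case (Suc m)
  have "coeff (coeff (tt q (Suc m + d) f) k) i = coeff (coeff (tt q (Suc (m + d)) f) k) i" by simp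
  also have "\<dots> = (if i \<ge> 1 then q ^ k * coeff (coeff (tt q (m + d) f) k) (i - 1) else 0)
   + qint q (Suc k) * coeff (coeff (tt q (m + d) f) (Suc k)) i" by (rule tt_rec)
  also have "\<dots> = (if i < d then 0 else coeff (coeff (tt q (Suc m) f) k) (i - d))"
    using dpos by (simp add: Suc.IH tt_rec Suc_diff_le; arith)
  finally show ?case .
qed

lemma tt_shift: "tt q (m + d) f = smult (monom 1 d) (tt q m f)"
  by (intro poly_eqI) (simp add: tt_shift_coeff coeff_monom_mult)

end


lemma smult_sum_right: "smult c (\<Sum>i\<in>S. f i) = (\<Sum>i\<in>S. smult c (f i))"
  by (rule poly_eqI) (simp add: coeff_sum sum_distrib_left)

lemma tt_add: "tt q m (f + g) = tt q m f + tt q m g"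
  by (intro poly_eqI) (simp add: coeff_tt algebra_simps)

lemma tt_smult: "tt q m (smult c f) = smult [:c:] (tt q m f)"
  by (intro poly_eqI) (simp add: coeff_tt algebra_simps)

lemma tt_0[simp]: "tt q m 0 = 0"
  by (intro poly_eqI) (simp add: coeff_tt)

lemma tau_tt: "tau q P = (\<Sum>m\<le>degree P. tt q m (coeff P m))"
  by (simp add: tau_def tt_def)

lemma tau_alt: "degree P \<le> N \<Longrightarrow> tau q P = (\<Sum>m\<le>N. tt q m (coeff P m))"
  unfolding tau_tt
  by (rule sum.mono_neutral_left) (auto simp: coeff_eq_0)

lemma tau_add: "tau q (P + Q) = tau q P + tau q Q"
proof -
  define N where "N = max (degree P) (degree Q)"
  have "degree (P + Q) \<le> N" unfolding N_def by (rule degree_add_le) auto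
  then have "tau q (P + Q) = (\<Sum>m\<le>N. tt q m (coeff (P + Q) m))" by (rule tau_alt)
  also have "\<dots> = (\<Sum>m\<le>N. tt q m (coeff P m)) + (\<Sum>m\<le>N. tt q m (coeff Q m))"
    by (simp add: tt_add sum.distrib)
  also have "\<dots> = tau q P + tau q Q"
    using tau_alt[where P=P and N=N and q=q] tau_alt[where P=Q and N=N and q=q] by (simp add: N_def)
  finally show ?thesis .
qed

lemma tau_smult: "tau q (smult [:c:] P) = smult [:c:] (tau q P)"
proof -
  have "degree (smult [:c:] P) \<le> degree P" by (rule degree_smult_le)
  then have "tau q (smult [:c:] P) = (\<Sum>m\<le>degree P. tt q m (coeff (smult [:c:] P) m))" by (rule tau_alt)
  also have "\<dots> = smult [:c:] (tau q P)"
    by (simp add: tau_tt smult_sum_right tt_smult)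
  finally show ?thesis .
qed

lemma tau_0[simp]: "tau q 0 = 0" by (simp add: tau_tt)

lemma tau_sum: "tau q (\<Sum>i\<in>S. f i) = (\<Sum>i\<in>S. tau q (f i))"
  by (induction S rule: infinite_finite_induct) (simp_all add: tau_add)

lemma ptens_add_left: "ptens (a + b) f = ptens a f + ptens b f"
  by (rule poly_eqI) (simp add: coeff_ptens smult_add_left)
lemma ptens_smult_left: "ptens (smult c a) f = smult [:c:] (ptens a f)"
  by (rule poly_eqI) (simp add: coeff_ptens mult.commute)

lemma smult_comm: "smult a (smult b A) = smult b (smult a A)"
  by (simp add: mult.commute)

lemma monom_mult_eq: "monom (a::'a::field) n * c = smult a (monom 1 n * c)"
proof -
  have "monom a n = smult a (monom 1 n)" by (simp add: smult_monom)
  then show ?thesis by simp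
qed
lemma ptens_0_left[simp]: "ptens 0 f = 0"
  by (rule poly_eqI) (simp add: coeff_ptens)
lemma ptens_0_right[simp]: "ptens a 0 = 0"
  by (rule poly_eqI) (simp add: coeff_ptens)
lemma smult_ptens: "smult G (ptens a b) = ptens a (G * b)"
  by (rule poly_eqI) (simp add: coeff_ptens)
lemma ptens_sum_left: "ptens (\<Sum>i\<in>S. f i) g = (\<Sum>i\<in>S. ptens (f i) g)"
  by (induction S rule: infinite_finite_induct) (simp_all add: ptens_add_left)

lemma degree_ptens_le: "degree (ptens e f) \<le> degree e"
  by (rule degree_le) (simp add: coeff_ptens coeff_eq_0)

definition TF :: "'a::field \<Rightarrow> 'a poly \<Rightarrow> 'a poly \<Rightarrow> 'a poly poly" where
  "TF q f e = tau q (ptens e f)"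

lemma TF_alt: "degree e \<le> N \<Longrightarrow> TF q f e = (\<Sum>m\<le>N. smult [:coeff e m:] (tt q m f))"
  unfolding TF_def
  by (subst tau_alt[where N=N]) (auto intro: order.trans[OF degree_ptens_le] simp: coeff_ptens tt_smult)

lemma TF_add: "TF q f (a + b) = TF q f a + TF q f b"
  by (simp add: TF_def ptens_add_left tau_add)
lemma TF_smult: "TF q f (smult c a) = smult [:c:] (TF q f a)"
  by (simp add: TF_def ptens_smult_left tau_smult)
lemma TF_0[simp]: "TF q f 0 = 0"
  by (simp add: TF_def)
lemma TF_sum: "TF q f (\<Sum>i\<in>S. g i) = (\<Sum>i\<in>S. TF q f (g i))"
  by (simp add: TF_def ptens_sum_left tau_sum)

context rou
begin

lemma TF_shift: "TF q f (monom 1 d * e) = smult (monom 1 d) (TF q f e)"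
proof -
  define N where "N = degree e"
  have "degree (monom 1 d * e) \<le> N + d"
    unfolding N_def by (rule degree_le) (auto simp: coeff_monom_mult coeff_eq_0)
  then have "TF q f (monom 1 d * e) = (\<Sum>m\<le>N + d. smult [:coeff (monom 1 d * e) m:] (tt q m f))"
    by (rule TF_alt)
  also have "\<dots> = (\<Sum>m\<in>{d..N + d}. smult [:coeff (monom 1 d * e) m:] (tt q m f))"
    by (rule sum.mono_neutral_right) (auto simp: coeff_monom_mult)
  also have "\<dots> = (\<Sum>m\<in>{0..N}. smult [:coeff (monom 1 d * e) (m + d):] (tt q (m + d) f))"
    using sum.shift_bounds_cl_nat_ivl[of "\<lambda>m. smult [:coeff (monom 1 d * e) m:] (tt q m f)" 0 d N]
    by simp
  also have "\<dots> = (\<Sum>m\<le>N. smult (monom 1 d) (smult [:coeff e m:] (tt q m f)))"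
    by (rule sum.cong) (auto simp: coeff_monom_mult tt_shift smult_comm[of "monom 1 d"])
  also have "\<dots> = smult (monom 1 d) (TF q f e)"
    by (simp add: TF_alt[where N=N] N_def smult_sum_right)
  finally show ?thesis .
qed

lemma TF_pow: "TF q f (monom 1 (d * t) * e) = smult (monom 1 (d * t)) (TF q f e)"
proof (induction t)
  case 0 then show ?case by simp
next
  case (Suc t)
  have "TF q f (monom 1 (d * Suc t) * e) = TF q f (monom 1 d * (monom 1 (d * t) * e))"
    by (simp add: mult_monom mult.assoc[symmetric])
  also have "\<dots> = smult (monom 1 d) (smult (monom 1 (d * t)) (TF q f e))"
    by (simp only: TF_shift Suc.IH)
  also have "\<dots> = smult (monom 1 (d * Suc t)) (TF q f e)" by (simp add: mult_monom)
  finally show ?case .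
qed

lemma TF_mult:
  assumes G: "\<And>j. coeff G j \<noteq> 0 \<Longrightarrow> d dvd j"
  shows "TF q f (G * c) = smult G (TF q f c)"
proof -
  have "G * c = (\<Sum>j\<le>degree G. smult (coeff G j) (monom 1 j * c))"
    by (subst (1) poly_as_sum_of_monoms[symmetric, of G])
       (simp add: sum_distrib_right monom_mult_eq[of "coeff G _"])
  then have "TF q f (G * c) = (\<Sum>j\<le>degree G. smult [:coeff G j:] (TF q f (monom 1 j * c)))"
    by (simp add: TF_sum TF_smult)
  also have "\<dots> = (\<Sum>j\<le>degree G. smult (monom (coeff G j) j) (TF q f c))"
  proof (rule sum.cong)
    fix j assume "j \<in> {..degree G}"
    show "smult [:coeff G j:] (TF q f (monom 1 j * c)) = smult (monom (coeff G j) j) (TF q f c)"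
    proof (cases "coeff G j = 0")
      case True then show ?thesis by simp
    next
      case False
      then obtain t where "j = d * t" using G by (auto elim: dvdE)
      then show ?thesis by (simp add: TF_pow smult_monom)
    qed
  qed simp
  also have "\<dots> = smult G (TF q f c)"
    by (simp add: smult_sum poly_as_sum_of_monoms flip: smult_sum)
  finally show ?thesis .
qed

end



lemma qderiv_char: "smult (q - 1) (pCons 0 (qderiv q g)) = theta q g - g"
proof (rule poly_eqI)
  fix k show "coeff (smult (q - 1) (pCons 0 (qderiv q g))) k = coeff (theta q g - g) k"
  proof (cases k)
    case 0 then show ?thesis by (simp add: coeff_theta)
  next
    case (Suc k')
    have "(q - 1) * (qint q (Suc k') * coeff g (Suc k')) = (q ^ Suc k' - 1) * coeff g (Suc k')"
      using qint_mult[of q "Suc k'"] by (simp add: mult.assoc[symmetric])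
    then show ?thesis using Suc by (simp add: coeff_theta coeff_qderiv algebra_simps)
  qed
qed

lemma theta_mult: "theta q (a * b) = theta q a * theta q b"
  by (simp add: theta_def pcompose_mult)

lemma qderiv_inv:
  assumes q1: "q \<noteq> 1" and N: "theta q N = N"
  shows "qderiv q (N * g) = N * qderiv q g"
proof -
  have "smult (q - 1) (pCons 0 (qderiv q (N * g))) = theta q (N * g) - N * g"
    by (rule qderiv_char)
  also have "\<dots> = N * (theta q g - g)" by (simp add: theta_mult N algebra_simps)
  also have "\<dots> = N * smult (q - 1) (pCons 0 (qderiv q g))" by (simp only: qderiv_char)
  also have "\<dots> = smult (q - 1) (pCons 0 (N * qderiv q g))" by (simp add: mult_pCons_right)
  finally have "smult (q - 1) (pCons 0 (qderiv q (N * g))) = smult (q - 1) (pCons 0 (N * qderiv q g))" .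
  then have "smult (q - 1) (qderiv q (N * g)) = smult (q - 1) (N * qderiv q g)" by simp
  moreover have "q - 1 \<noteq> 0" using q1 by simp
  ultimately show ?thesis using smult_cancel[of "q - 1" "qderiv q (N * g)" "N * qderiv q g"] by blast
qed

lemma theta_inv: "theta q N = N \<Longrightarrow> theta q (N * g) = N * theta q g"
  by (simp add: theta_mult)

lemma ops_inv:
  assumes q1: "q \<noteq> 1" and N: "theta q N = N"
  shows "(theta q ^^ i) ((qderiv q ^^ n) (N * g)) = N * (theta q ^^ i) ((qderiv q ^^ n) g)"
proof -
  have "(qderiv q ^^ n) (N * g) = N * (qderiv q ^^ n) g"
    by (induction n) (simp_all add: qderiv_inv[OF q1 N])
  moreover have "(theta q ^^ i) (N * h) = N * (theta q ^^ i) h" for h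
    by (induction i) (simp_all add: theta_inv[OF N])
  ultimately show ?thesis by simp
qed

lemma tt_inv:
  assumes q1: "q \<noteq> 1" and N: "theta q N = N"
  shows "tt q m (N * h) = (\<Sum>i\<le>m. ptens (N * smult (qbinom q m i) ((theta q ^^ i) ((qderiv q ^^ (m - i)) h))) (monom 1 i))"
  unfolding tt_def by (rule sum.cong) (simp_all add: ops_inv[OF q1 N])

definition Ng :: "'a::field \<Rightarrow> nat \<Rightarrow> 'a poly \<Rightarrow> 'a poly" where
  "Ng q d p = (\<Prod>j<d. (theta q ^^ j) p)"

context rou
begin

lemma theta_pow_d: "(theta q ^^ d) p = p"
  by (rule poly_eqI) (simp add: coeff_theta_pow power_mult qd)

lemma theta_pow_nz: "p \<noteq> 0 \<Longrightarrow> (theta q ^^ j) p \<noteq> 0"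
proof
  assume "p \<noteq> 0" "(theta q ^^ j) p = 0"
  have "q ^ (j * k) * coeff p k = 0" for k
    using arg_cong[OF \<open>(theta q ^^ j) p = 0\<close>, of "\<lambda>x. coeff x k"] by (simp only: coeff_theta_pow coeff_0)
  then have "coeff p k = 0" for k using q0 by simp
  then show False using \<open>p \<noteq> 0\<close> by (simp add: poly_eqI)
qed

lemma Ng_nz: "p \<noteq> 0 \<Longrightarrow> Ng q d p \<noteq> 0"
  by (simp add: Ng_def theta_pow_nz)

lemma Ng_dvd: "\<exists>r. Ng q d p = p * r"
proof -
  obtain d' where d': "d = Suc d'" using dpos by (cases d) auto
  show ?thesis unfolding Ng_def d' prod.lessThan_Suc_shift by (simp del: prod.lessThan_Suc)
qed

lemma Ng_theta: "theta q (Ng q d p) = Ng q d p"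
proof -
  obtain d' where d': "d = Suc d'" using dpos by (cases d) auto
  have "theta q (Ng q d p) = (\<Prod>j<d. (theta q ^^ Suc j) p)"
    by (simp add: Ng_def theta_def pcompose_prod)
  also have "\<dots> = (\<Prod>j<d'. (theta q ^^ Suc j) p) * (theta q ^^ d) p"
    by (simp add: d')
  also have "\<dots> = (\<Prod>j<d'. (theta q ^^ Suc j) p) * p" by (simp add: theta_pow_d)
  also have "\<dots> = Ng q d p"
    unfolding Ng_def d' prod.lessThan_Suc_shift by (simp add: mult.commute del: prod.lessThan_Suc)
  finally show ?thesis .
qed

lemma Ng_coeff: "coeff (Ng q d p) j \<noteq> 0 \<Longrightarrow> d dvd j"
proof -
  assume nz: "coeff (Ng q d p) j \<noteq> 0"
  have "q ^ j * coeff (Ng q d p) j = coeff (Ng q d p) j"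
    using arg_cong[OF Ng_theta[of p], of "\<lambda>x. coeff x j"] by (simp add: coeff_theta)
  then have "q ^ j = 1" using nz by simp
  then show ?thesis by (simp add: pow_one_iff)
qed

end


lemma fin_codim_nz:
  assumes "fin_codim (I :: 'a::field poly set)"
  shows "\<exists>p\<in>I. p \<noteq> 0"
proof -
  obtain bs :: "'a poly list" where bs: "\<forall>p. \<exists>cs :: 'a list. length cs = length bs \<and>
      p - (\<Sum>i<length bs. smult (cs ! i) (bs ! i)) \<in> I"
    using assms unfolding fin_codim_def by blast
  define D where "D = Suc (\<Sum>i<length bs. degree (bs ! i))"
  obtain cs :: "'a list" where cs: "monom 1 D - (\<Sum>i<length bs. smult (cs ! i) (bs ! i)) \<in> I"
    using bs by blast
  have "degree (bs ! i) < D" if "i < length bs" for i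
  proof -
    have "degree (bs ! i) \<le> (\<Sum>i<length bs. degree (bs ! i))"
      using that by (intro member_le_sum) auto
    then show ?thesis unfolding D_def by simp
  qed
  then have "coeff (bs ! i) D = 0" if "i < length bs" for i
    using that by (simp add: coeff_eq_0)
  then have c0: "coeff (\<Sum>i<length bs. smult (cs ! i) (bs ! i)) D = 0"
    by (simp add: coeff_sum)
  have "monom 1 D - (\<Sum>i<length bs. smult (cs ! i) (bs ! i)) \<noteq> 0"
  proof
    assume "monom 1 D - (\<Sum>i<length bs. smult (cs ! i) (bs ! i)) = 0"
    then have "monom 1 D = (\<Sum>i<length bs. smult (cs ! i) (bs ! i))" by simp
    then have "coeff (monom (1::'a) D) D = coeff (\<Sum>i<length bs. smult (cs ! i) (bs ! i)) D" by simp
    with c0 show False by simp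
  qed
  then show ?thesis using cs by blast
qed

lemma cofinite_open_PI:
  fixes G :: "'a::field poly"
  assumes "G \<noteq> 0"
  shows "cofinite_open {G * c | c. True}"
proof -
  let ?S = "{G * c | c. True}"
  have l: "lsub smult ?S"
    unfolding lsub_def
    by (auto simp: distrib_left[symmetric] mult_smult_right[symmetric] simp del: mult_smult_right intro: exI[of _ 0])
  have i: "poly_ideal ?S"
    unfolding poly_ideal_def
    apply (intro conjI allI impI ballI)
      apply (metis (mono_tags, lifting) mem_Collect_eq mult_zero_right)
     apply (auto simp: distrib_left[symmetric])
    done
  have f: "fin_codim ?S"
    unfolding fin_codim_def
  proof (rule exI[of _ "map (\<lambda>i. monom (1::'a) i) [0..<degree G]"], intro allI)
    fix p :: "'a poly"
    let ?bs = "map (\<lambda>i. monom (1::'a) i) [0..<degree G]"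
    let ?cs = "map (\<lambda>i. coeff (p mod G) i) [0..<degree G]"
    have s: "(\<Sum>i<length ?bs. smult (?cs ! i) (?bs ! i)) = p mod G"
    proof (rule poly_eqI)
      fix n
      have "coeff (\<Sum>i<length ?bs. smult (?cs ! i) (?bs ! i)) n
          = (\<Sum>i<degree G. if n = i then coeff (p mod G) i else 0)"
        by (auto simp: coeff_sum coeff_monom mult_if01 intro!: sum.cong)
      also have "\<dots> = coeff (p mod G) n"
        using degree_mod_less[OF assms, of p] by (auto simp: coeff_eq_0)
      finally show "coeff (\<Sum>i<length ?bs. smult (?cs ! i) (?bs ! i)) n = coeff (p mod G) n" .
    qed
    have "p - p mod G = G * (p div G)"
      using div_mult_mod_eq[of p G] by (simp add: algebra_simps)
    then show "\<exists>cs. length cs = length ?bs \<and> p - (\<Sum>i<length ?bs. smult (cs ! i) (?bs ! i)) \<in> ?S"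
    proof -
      have s': "(\<Sum>i<degree G. smult (coeff (p mod G) i) (monom 1 i)) = p mod G" using s by simp
      show ?thesis by (intro exI[of _ ?cs]) (auto simp: s' \<open>p - p mod G = G * (p div G)\<close>)
    qed
  qed
  show ?thesis unfolding cofinite_open_def using l i f by blast
qed

lemma ptens_in_tens_sub: "a \<in> AA \<Longrightarrow> b \<in> BB \<Longrightarrow> ptens a b \<in> tens_sub AA BB"
  unfolding tens_sub_def
  by (rule CollectI, rule exI[of _ 1], rule exI[of _ "\<lambda>_. a"], rule exI[of _ "\<lambda>_. b"]) simp

lemma zero_in_tens_sub: "0 \<in> tens_sub AA BB"
  unfolding tens_sub_def
  by (rule CollectI, rule exI[of _ 0]) simp

lemma lsub_sum:
  assumes "lsub scl W" "\<And>i. i \<in> S \<Longrightarrow> g i \<in> W"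
  shows "sum g S \<in> W"
  using assms(2)
proof (induction S rule: infinite_finite_induct)
  case (infinite A) then show ?case using assms(1) by (simp add: lsub_def)
next
  case empty then show ?case using assms(1) by (simp add: lsub_def)
next
  case (insert x F) then show ?case using assms(1) by (simp add: lsub_def)
qed

lemma smult_if01: "smult (if P then 1 else 0) (x::'a::field poly) = (if P then x else 0)" by simp

lemma pp_decomp: "X = (\<Sum>k\<le>degree X. ptens (monom 1 k) (coeff X k))"
proof (rule poly_eqI)
  fix j
  have "coeff (\<Sum>k\<le>degree X. ptens (monom 1 k) (coeff X k)) j = (\<Sum>k\<le>degree X. if j = k then coeff X k else 0)"
    by (auto simp: coeff_sum coeff_ptens coeff_monom smult_if01 intro!: sum.cong)
  also have "\<dots> = coeff X j" by (auto simp: coeff_eq_0)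
  finally show "coeff X j = coeff (\<Sum>k\<le>degree X. ptens (monom 1 k) (coeff X k)) j" by simp
qed

lemma ptens_monom: "ptens (monom 1 m) r = monom r m"
  by (rule poly_eqI) (simp add: coeff_ptens coeff_monom)

lemma tau_monom: "tau q (monom r m) = tt q m r"
proof -
  have "tau q (monom r m) = (\<Sum>m'\<le>m. tt q m' (coeff (monom r m) m'))"
    by (rule tau_alt) (simp add: degree_monom_le)
  also have "\<dots> = (\<Sum>m'\<le>m. if m = m' then tt q m r else 0)"
    by (rule sum.cong) (auto simp: coeff_monom)
  also have "\<dots> = tt q m r" by simp
  finally show ?thesis .
qed

lemma Pq_nz: "(\<And>j. qint q (Suc k + j) \<noteq> 0) \<Longrightarrow> Pq q k n \<noteq> 0"
proof (induction n arbitrary: k)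
  case 0 then show ?case by simp
next
  case (Suc n)
  have "qint q (Suc k) \<noteq> 0" using Suc.prems[of 0] by simp
  moreover have "Pq q (Suc k) n \<noteq> 0"
    using Suc.prems by (intro Suc.IH) (metis add_Suc_shift)
  ultimately show ?case by simp
qed



lemma tens_subE:
  assumes "x \<in> tens_sub A B"
  obtains n :: nat and es fs where "x = (\<Sum>i<n. ptens (es i) (fs i))" "\<forall>i<n. es i \<in> A" "\<forall>i<n. fs i \<in> B"
proof -
  have "\<exists>n::nat. \<exists>es fs. x = (\<Sum>i<n. ptens (es i) (fs i)) \<and> (\<forall>i<n. es i \<in> A \<and> fs i \<in> B)"
    using assms unfolding tens_sub_def by simp
  then obtain n :: nat and es fs where "x = (\<Sum>i<n. ptens (es i) (fs i))" "\<forall>i<n. es i \<in> A \<and> fs i \<in> B"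
    by blast
  then show ?thesis using that by simp
qed

lemma rou_exists:
  assumes "q \<noteq> 0" "q \<noteq> 1" "n > 0" "q ^ n = 1"
  shows "\<exists>d. rou q d"
proof -
  define d where "d = (LEAST n. 0 < n \<and> q ^ n = 1)"
  have d: "0 < d \<and> q ^ d = 1" unfolding d_def by (rule LeastI[of _ n]) (use assms in auto)
  have "d dvd j" if "q ^ j = 1" for j
  proof -
    have e1: "q ^ j = q ^ (d * (j div d) + j mod d)" by (simp only: mult_div_mod_eq)
    have e2: "q ^ (d * (j div d) + j mod d) = (q ^ d) ^ (j div d) * q ^ (j mod d)"
      by (simp only: power_add power_mult)
    have "q ^ (j mod d) = 1" using that trans[OF e1 e2] d by simp
    moreover have "j mod d < d" using d by simp
    ultimately have "\<not> (0 < j mod d)"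
      using not_less_Least[of "j mod d" "\<lambda>n. 0 < n \<and> q ^ n = 1"] unfolding d_def by auto
    then show ?thesis by (simp add: mod_eq_0_iff_dvd)
  qed
  then show ?thesis using assms d unfolding rou_def by blast
qed

lemma (in rou) cont: "bang_continuous (tau q)"
  unfolding bang_continuous_def
proof (intro allI impI)
  fix W :: "'a poly poly set" assume "bang_open W"
  then obtain E0 F0 where W: "lsub (\<lambda>c. smult [:c:]) W" "cofinite_open E0" "cofinite_open F0"
     "{a + b | a b. a \<in> tens_sub E0 UNIV \<and> b \<in> tens_sub UNIV F0} \<subseteq> W"
    unfolding bang_open_def by blast
  obtain I where I: "poly_ideal I" "fin_codim I" "I \<subseteq> E0" using W(2) unfolding cofinite_open_def by blast
  obtain J where J: "poly_ideal J" "fin_codim J" "J \<subseteq> F0" using W(3) unfolding cofinite_open_def by blast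
  obtain p where p: "p \<in> I" "p \<noteq> 0" using fin_codim_nz[OF I(2)] by blast
  obtain r where r: "r \<in> J" "r \<noteq> 0" using fin_codim_nz[OF J(2)] by blast
  define Nx where "Nx = Ng q d p"
  define Gy where "Gy = Ng q d r"
  have Nx_I: "Nx * z \<in> I" for z
  proof -
    obtain t where "Nx = p * t" using Ng_dvd unfolding Nx_def by blast
    then show ?thesis using I(1) p(1) unfolding poly_ideal_def by (simp add: mult.assoc)
  qed
  have Gy_J: "Gy * z \<in> J" for z
  proof -
    obtain t where "Gy = r * t" using Ng_dvd unfolding Gy_def by blast
    then show ?thesis using J(1) r(1) unfolding poly_ideal_def by (simp add: mult.assoc)
  qed
  have Wadd: "a \<in> W \<Longrightarrow> b \<in> W \<Longrightarrow> a + b \<in> W" for a b using W(1) unfolding lsub_def by blast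
  have WE: "ptens a b \<in> W" if "a \<in> E0" for a b
  proof -
    have "ptens a b + 0 \<in> {a + b | a b. a \<in> tens_sub E0 UNIV \<and> b \<in> tens_sub UNIV F0}"
      using ptens_in_tens_sub[OF that, of b UNIV] zero_in_tens_sub by blast
    then show ?thesis using W(4) by auto
  qed
  have WF: "ptens a b \<in> W" if "b \<in> F0" for a b
  proof -
    have "0 + ptens a b \<in> {a + b | a b. a \<in> tens_sub E0 UNIV \<and> b \<in> tens_sub UNIV F0}"
      using ptens_in_tens_sub[OF _ that, of a UNIV] zero_in_tens_sub by blast
    then show ?thesis using W(4) by auto
  qed
  have Wsum: "sum g S \<in> W" if "\<And>i. i \<in> S \<Longrightarrow> g i \<in> W" for g and S :: "'b set"
    by (rule lsub_sum[OF W(1) that])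
  have y: "tau q (ptens (Gy * c) f) \<in> W" for c f
  proof -
    define X where "X = TF q f c"
    have "tau q (ptens (Gy * c) f) = smult Gy X"
      unfolding X_def using TF_mult[where G="Ng q d r" and f=f and c=c, OF Ng_coeff] by (simp add: TF_def Gy_def)
    also have "\<dots> = (\<Sum>k\<le>degree X. ptens (monom 1 k) (Gy * coeff X k))"
      by (subst (1) pp_decomp) (simp add: smult_sum_right smult_ptens)
    also have "\<dots> \<in> W"
      by (intro Wsum WF) (use Gy_J J(3) in blast)
    finally show ?thesis .
  qed
  have x: "tau q (ptens e (Nx * h)) \<in> W" for e h
  proof -
    have "tau q (ptens e (Nx * h)) = (\<Sum>m\<le>degree (ptens e (Nx * h)). tt q m (coeff (ptens e (Nx * h)) m))"
      by (rule tau_tt)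
    also have "\<dots> \<in> W"
    proof (rule Wsum)
      fix m
      have "coeff (ptens e (Nx * h)) m = Nx * smult (coeff e m) h" by (simp add: coeff_ptens)
      then have "tt q m (coeff (ptens e (Nx * h)) m) = (\<Sum>i\<le>m. ptens (Nx * smult (qbinom q m i)
            ((theta q ^^ i) ((qderiv q ^^ (m - i)) (smult (coeff e m) h)))) (monom 1 i))"
        using tt_inv[OF q1 Ng_theta[of p]] by (simp only: Nx_def)
      also have "\<dots> \<in> W"
        by (intro Wsum WE) (use Nx_I I(3) in blast)
      finally show "tt q m (coeff (ptens e (Nx * h)) m) \<in> W" .
    qed
    finally show ?thesis .
  qed
  define V where "V = {P. tau q P \<in> W}"
  have lV: "lsub (\<lambda>c. smult [:c:]) V"
    using W(1) unfolding lsub_def V_def by (auto simp: tau_add tau_smult)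
  have cE: "cofinite_open {Gy * c | c. True}"
    using cofinite_open_PI Ng_nz[OF r(2)] unfolding Gy_def by blast
  have cF: "cofinite_open {Nx * c | c. True}"
    using cofinite_open_PI Ng_nz[OF p(2)] unfolding Nx_def by blast
  have sV: "{a + b | a b. a \<in> tens_sub {Gy * c | c. True} UNIV \<and> b \<in> tens_sub UNIV {Nx * c | c. True}} \<subseteq> V"
  proof
    fix P assume "P \<in> {a + b | a b. a \<in> tens_sub {Gy * c | c. True} UNIV \<and> b \<in> tens_sub UNIV {Nx * c | c. True}}"
    then obtain a b where ab: "P = a + b" "a \<in> tens_sub {Gy * c | c. True} UNIV" "b \<in> tens_sub UNIV {Nx * c | c. True}"
      by blast
    obtain n1 :: nat and es1 fs1 where a: "a = (\<Sum>i<n1. ptens (es1 i) (fs1 i))" and e1: "\<forall>i<n1. es1 i \<in> {Gy * c | c. True}"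
      using ab(2) by (rule tens_subE) blast
    obtain n2 :: nat and es2 fs2 where b: "b = (\<Sum>i<n2. ptens (es2 i) (fs2 i))" and f2: "\<forall>i<n2. fs2 i \<in> {Nx * c | c. True}"
      using ab(3) by (rule tens_subE) blast
    have P: "P = (\<Sum>i<n1. ptens (es1 i) (fs1 i)) + (\<Sum>i<n2. ptens (es2 i) (fs2 i))"
      using ab(1) a b by simp
    have "tau q P = (\<Sum>i<n1. tau q (ptens (es1 i) (fs1 i))) + (\<Sum>i<n2. tau q (ptens (es2 i) (fs2 i)))"
      by (simp add: P tau_add tau_sum)
    also have "\<dots> \<in> W"
    proof (rule Wadd)
      show "(\<Sum>i<n1. tau q (ptens (es1 i) (fs1 i))) \<in> W"
        by (rule Wsum) (use e1 y in auto)
      show "(\<Sum>i<n2. tau q (ptens (es2 i) (fs2 i))) \<in> W"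
        by (rule Wsum) (use f2 x in auto)
    qed
    finally show "P \<in> V" unfolding V_def by simp
  qed
  have "bang_open V" unfolding bang_open_def using lV cE cF sV by blast
  moreover have "tau q ` V \<subseteq> W" unfolding V_def by auto
  ultimately show "\<exists>V. bang_open V \<and> tau q ` V \<subseteq> W" by blast
qed

lemma notcont:
  fixes q :: "'a::field"
  assumes q0: "q \<noteq> 0" and q1: "q \<noteq> 1" and nr: "\<forall>n>0. q ^ n \<noteq> 1"
  shows "\<not> bang_continuous (tau q)"
proof
  assume c: "bang_continuous (tau q)"
  define X0 :: "'a poly set" where "X0 = {p. coeff p 0 = 0}"
  define W0 :: "'a poly poly set" where "W0 = {P. coeff (coeff P 0) 0 = 0}"
  have cX: "cofinite_open X0"
  proof -
    have l: "lsub smult X0" unfolding lsub_def X0_def by simp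
    have i: "poly_ideal X0" unfolding poly_ideal_def X0_def by (simp add: coeff_mult_0)
    have f: "fin_codim X0" unfolding fin_codim_def X0_def
      by (rule exI[of _ "[1]"], intro allI, rule_tac x="[coeff p 0]" in exI) simp
    show ?thesis unfolding cofinite_open_def using l i f by blast
  qed
  have t0: "coeff (coeff a 0) 0 = 0" if "a \<in> tens_sub X0 UNIV \<or> a \<in> tens_sub UNIV X0" for a
    using that unfolding tens_sub_def X0_def by (auto simp: coeff_sum coeff_coeff_ptens)
  have "bang_open W0"
    unfolding bang_open_def
  proof (intro conjI exI)
    show "lsub (\<lambda>c. smult [:c:]) W0" unfolding lsub_def W0_def by simp
    show "cofinite_open X0" by (rule cX)
    show "cofinite_open X0" by (rule cX)
    show "{a + b | a b. a \<in> tens_sub X0 UNIV \<and> b \<in> tens_sub UNIV X0} \<subseteq> W0"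
      unfolding W0_def using t0 by auto
  qed
  then obtain V where V: "bang_open V" "tau q ` V \<subseteq> W0" using c unfolding bang_continuous_def by blast
  then obtain E0 F0 where "cofinite_open F0" and sV: "{a + b | a b. a \<in> tens_sub E0 UNIV \<and> b \<in> tens_sub UNIV F0} \<subseteq> V"
    unfolding bang_open_def by blast
  then obtain I where I: "fin_codim I" "I \<subseteq> F0" unfolding cofinite_open_def by blast
  obtain r where r: "r \<in> I" "r \<noteq> 0" using fin_codim_nz[OF I(1)] by blast
  define m where "m = degree r"
  have "0 + ptens (monom 1 m) r \<in> {a + b | a b. a \<in> tens_sub E0 UNIV \<and> b \<in> tens_sub UNIV F0}"
    using ptens_in_tens_sub[of "monom 1 m" UNIV r F0] zero_in_tens_sub r I(2) by blast
  then have "ptens (monom 1 m) r \<in> V" using sV by auto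
  then have "tau q (ptens (monom 1 m) r) \<in> W0" using V(2) by auto
  then have z: "coeff (coeff (tt q m r) 0) 0 = 0" by (simp add: W0_def ptens_monom tau_monom)
  have "Pq q 0 m \<noteq> 0"
    by (rule Pq_nz) (use nr qint_zero_iff[OF q1] in auto)
  moreover have "coeff r m \<noteq> 0" using r(2) unfolding m_def by simp
  ultimately show False using z by (simp add: coeff_tt)
qed

theorem lemma5p1:
  fixes q :: "'a::field"
  assumes "q \<noteq> 0" and "q \<noteq> 1"
  shows "bang_continuous (tau q) \<longleftrightarrow> (\<exists>n>0. q ^ n = 1)"
proof
  assume "bang_continuous (tau q)"
  then show "\<exists>n>0. q ^ n = 1" using notcont assms by blast
next
  assume "\<exists>n>0. q ^ n = 1"
  then obtain n where "n > 0" "q ^ n = 1" by blast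
  then obtain d where "rou q d" using rou_exists assms by blast
  then show "bang_continuous (tau q)" by (rule rou.cont)
qed



end
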